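(* Let $T>0$ and let $\pi=(\pi^n)_{n\geq 1}$ be a sequence of partitions $\pi^n=(0=t^n_0<t^n_1<\cdots<t^n_{N(\pi^n)}=T)$ of $[0,T]$ with vanishing mesh, i.e. $|\pi^n|\to 0$. Then: (i) $\pi$ is balanced if and only if $\liminf_{n\to\infty} N(\pi^n)\,\underline{\pi^n}>0$ and $\limsup_{n\to\infty} N(\pi^n)\,|\pi^n|<\infty$. (ii) For $0\le t_1\le t_2\le T$ let $N(\pi^n,t_1,t_2)$ denote the number of partition points of $\pi^n$ in $[t_1,t_2]$. If $\pi$ is balanced, then for any $h\in(0,T]$, $$\limsup_{n\to\infty}\frac{\sup_{t\in[0,T-h]}N(\pi^n,t,t+h)}{\inf_{t\in[0,T-h]}N(\pi^n,t,t+h)}<\infty.$$ (iii) If $\pi$ is balanced, then $$\limsup_n\frac{N(\pi^{n+1})}{N(\pi^n)}<\infty\iff\limsup_n\frac{|\pi^n|}{|\pi^{n+1}|}<\infty\iff\limsup_n\frac{\underline{\pi^n}}{\underline{\pi^{n+1}}}<\infty.$$ (iv) If $g\in C^1([0,T],\mathbb{R})$ is strictly increasing with $\inf_{[0,T]} g'>0$, then for any balanced partition sequence $(\pi^n)_{n\ge1}$ of $[0,T]$, the sequence $(g(\pi^n))_{n\geq1}$, where $g(\pi^n)=(g(t^n_0)<g(t^n_1)<\cdots<g(t^n_{N(\pi^n)}))$, is a balanced partition sequence of $g([0,T])=[g(0),g(T)]$.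
   Context: For a finite partition $\pi^n=(0=t^n_0<t^n_1<\cdots<t^n_{N(\pi^n)}=T)$ of $[0,T]$, $N(\pi^n)$ is the number of intervals, $|\pi^n|=\sup_{i}|t^n_{i}-t^n_{i-1}|$ is the largest interval length (mesh) and $\underline{\pi^n}=\inf_i|t^n_i-t^n_{i-1}|$ the smallest interval length. A sequence of partitions $(\pi^n)_{n\geq1}$ of an interval is called balanced if there exists $c>0$ such that $|\pi^n|/\underline{\pi^n}\le c$ for all $n\ge1$. *)

theory Defs
  imports "HOL-Analysis.Analysis"
begin

text \<open>A finite partition is represented by its number of intervals N and its points
  t 0, ..., t N (a function nat => real, only values at indices <= N matter).\<close>

definition is_partition :: "real \<Rightarrow> real \<Rightarrow> (nat \<Rightarrow> real) \<Rightarrow> nat \<Rightarrow> bool" where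
  "is_partition a b t N \<longleftrightarrow> t 0 = a \<and> t N = b \<and> (\<forall>i<N. t i < t (Suc i))"

definition partition_seq :: "real \<Rightarrow> real \<Rightarrow> (nat \<Rightarrow> nat \<Rightarrow> real) \<Rightarrow> (nat \<Rightarrow> nat) \<Rightarrow> bool" where
  "partition_seq a b t N \<longleftrightarrow> (\<forall>n\<ge>1. is_partition a b (t n) (N n))"

definition mesh :: "(nat \<Rightarrow> real) \<Rightarrow> nat \<Rightarrow> real" where
  "mesh t N = Max ((\<lambda>i. t (Suc i) - t i) ` {..<N})"

definition minmesh :: "(nat \<Rightarrow> real) \<Rightarrow> nat \<Rightarrow> real" where
  "minmesh t N = Min ((\<lambda>i. t (Suc i) - t i) ` {..<N})"

definition balanced :: "(nat \<Rightarrow> nat \<Rightarrow> real) \<Rightarrow> (nat \<Rightarrow> nat) \<Rightarrow> bool" where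
  "balanced t N \<longleftrightarrow> (\<exists>c>0. \<forall>n\<ge>1. mesh (t n) (N n) / minmesh (t n) (N n) \<le> c)"

definition npoints :: "(nat \<Rightarrow> real) \<Rightarrow> nat \<Rightarrow> real \<Rightarrow> real \<Rightarrow> nat" where
  "npoints t N s1 s2 = card {i. i \<le> N \<and> t i \<in> {s1..s2}}"

end

theory Submission
  imports Defs
begin


lemma part_N_pos: assumes "is_partition a b t N" "a < b" shows "N \<ge> 1"
  using assms unfolding is_partition_def by (cases N) auto

lemma part_gap_sum: assumes "is_partition a b t N"
  shows "(\<Sum>i<N. t (Suc i) - t i) = b - a"
  using assms sum_lessThan_telescope[of t N] unfolding is_partition_def by simp

lemma gap_le_mesh: "i < N \<Longrightarrow> t (Suc i) - t i \<le> mesh t N"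
  unfolding mesh_def by (rule Max_ge) auto

lemma minmesh_le_gap: "i < N \<Longrightarrow> minmesh t N \<le> t (Suc i) - t i"
  unfolding minmesh_def by (rule Min_le) auto

lemma minmesh_pos: assumes "is_partition a b t N" "N \<ge> 1" shows "minmesh t N > 0"
proof -
  have "minmesh t N \<in> (\<lambda>i. t (Suc i) - t i) ` {..<N}"
    unfolding minmesh_def using assms(2) by (intro Min_in) (auto simp: lessThan_empty_iff)
  then show ?thesis using assms(1) unfolding is_partition_def by auto
qed

lemma N_minmesh_le: assumes "is_partition a b t N"
  shows "real N * minmesh t N \<le> b - a"
proof -
  have "(\<Sum>i<N. minmesh t N) \<le> (\<Sum>i<N. t (Suc i) - t i)"
    by (intro sum_mono minmesh_le_gap) auto
  then show ?thesis using part_gap_sum[OF assms] by simp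
qed

lemma N_mesh_ge: assumes "is_partition a b t N"
  shows "b - a \<le> real N * mesh t N"
proof -
  have "(\<Sum>i<N. t (Suc i) - t i) \<le> (\<Sum>i<N. mesh t N)"
    by (intro sum_mono gap_le_mesh) auto
  then show ?thesis using part_gap_sum[OF assms] by simp
qed

lemma gaps_lower: assumes "\<And>i. i < N \<Longrightarrow> m \<le> t (Suc i) - t i" "i + d \<le> N"
  shows "real d * m \<le> t (i + d) - t i"
  using assms(2)
proof (induction d)
  case 0 then show ?case by simp
next
  case (Suc d)
  have "m \<le> t (Suc (i + d)) - t (i + d)" using assms(1) Suc.prems by auto
  then show ?case using Suc by (simp add: algebra_simps)
qed

lemma gaps_upper: assumes "\<And>i. i < N \<Longrightarrow> t (Suc i) - t i \<le> M" "i + d \<le> N"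
  shows "t (i + d) - t i \<le> real d * M"
  using assms(2)
proof (induction d)
  case 0 then show ?case by simp
next
  case (Suc d)
  have "t (Suc (i + d)) - t (i + d) \<le> M" using assms(1) Suc.prems by auto
  then show ?case using Suc by (simp add: algebra_simps)
qed

lemma part_mono: assumes "is_partition a b t N" "i \<le> j" "j \<le> N" shows "t i \<le> t j"
proof -
  have "real (j - i) * 0 \<le> t (i + (j - i)) - t i"
    using assms unfolding is_partition_def by (intro gaps_lower[where N=N]) (auto simp: less_imp_le)
  then show ?thesis using assms by simp
qed

lemma part_strict: assumes "is_partition a b t N" "i < j" "j \<le> N" shows "t i < t j"
proof -
  have "t i < t (Suc i)" using assms unfolding is_partition_def by auto
  moreover have "t (Suc i) \<le> t j" using part_mono[OF assms(1)] assms by auto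
  ultimately show ?thesis by simp
qed

lemma part_range: assumes "is_partition a b t N" "i \<le> N" shows "t i \<in> {a..b}"
  using part_mono[OF assms(1), of 0 i] part_mono[OF assms(1), of i N] assms
  unfolding is_partition_def by auto

lemma limsup_fin_iff:
  "limsup (\<lambda>n. ereal (f n)) < \<infinity> \<longleftrightarrow> (\<exists>B. eventually (\<lambda>n. f n \<le> B) sequentially)"
proof
  assume "limsup (\<lambda>n. ereal (f n)) < \<infinity>"
  then obtain r where "limsup (\<lambda>n. ereal (f n)) < ereal r" using ereal_dense2 by blast
  from Limsup_lessD[OF this] have "eventually (\<lambda>n. f n < r) sequentially" by simp
  then have "eventually (\<lambda>n. f n \<le> r) sequentially" by (rule eventually_mono) simp
  then show "\<exists>B. eventually (\<lambda>n. f n \<le> B) sequentially" by blast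
next
  assume "\<exists>B. eventually (\<lambda>n. f n \<le> B) sequentially"
  then obtain B where "eventually (\<lambda>n. ereal (f n) \<le> ereal B) sequentially" by auto
  from Limsup_bounded[OF this] have "limsup (\<lambda>n. ereal (f n)) \<le> ereal B" .
  moreover have "ereal B < \<infinity>" by (rule ereal_less_PInfty) simp
  ultimately show "limsup (\<lambda>n. ereal (f n)) < \<infinity>" by (rule le_less_trans)
qed

lemma liminf_pos_iff:
  "liminf (\<lambda>n. ereal (f n)) > 0 \<longleftrightarrow> (\<exists>d>0. eventually (\<lambda>n. d \<le> f n) sequentially)"
proof
  assume "liminf (\<lambda>n. ereal (f n)) > 0"
  then obtain r where r: "0 < ereal r" "ereal r < liminf (\<lambda>n. ereal (f n))" using ereal_dense2 by blast
  from less_LiminfD[OF r(2)] have "eventually (\<lambda>n. r < f n) sequentially" by simp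
  then have "eventually (\<lambda>n. r \<le> f n) sequentially" by (rule eventually_mono) simp
  moreover have "r > 0" using r(1) by simp
  ultimately show "\<exists>d>0. eventually (\<lambda>n. d \<le> f n) sequentially" by blast
next
  assume "\<exists>d>0. eventually (\<lambda>n. d \<le> f n) sequentially"
  then obtain d where "d > 0" "eventually (\<lambda>n. ereal d \<le> ereal (f n)) sequentially" by auto
  from Liminf_bounded[OF this(2)] have "ereal d \<le> liminf (\<lambda>n. ereal (f n))" .
  moreover have "0 < ereal d" using \<open>d > 0\<close> by simp
  ultimately show "liminf (\<lambda>n. ereal (f n)) > 0" by (rule less_le_trans[rotated])
qed

lemma eventually_bound_global:
  assumes "eventually (\<lambda>n. f n \<le> (B::real)) sequentially"
  shows "\<exists>c>0. \<forall>n. f n \<le> c"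
proof -
  obtain n0 where n0: "\<And>n. n \<ge> n0 \<Longrightarrow> f n \<le> B" using assms by (auto simp: eventually_sequentially)
  define c where "c = \<bar>B\<bar> + (\<Sum>n<n0. \<bar>f n\<bar>) + 1"
  have "f n \<le> c" for n
  proof (cases "n < n0")
    case True
    have "f n \<le> \<bar>f n\<bar>" by simp
    also have "\<dots> \<le> (\<Sum>n<n0. \<bar>f n\<bar>)" using True by (intro member_le_sum) auto
    finally show ?thesis unfolding c_def by simp
  next
    case False
    then have "f n \<le> B" using n0 by simp
    moreover have "0 \<le> (\<Sum>n<n0. \<bar>f n\<bar>)" by (intro sum_nonneg) auto
    ultimately show ?thesis unfolding c_def by linarith
  qed
  moreover have "c > 0" unfolding c_def by (smt (verit) sum_nonneg abs_ge_zero)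
  ultimately show ?thesis by blast
qed



lemma exists_cell:
  assumes P: "is_partition a b t N" and x: "a \<le> x" "x < b"
  shows "\<exists>i<N. t i \<le> x \<and> x < t (Suc i)"
proof (rule ccontr)
  assume H: "\<not> ?thesis"
  have "i \<le> N \<Longrightarrow> t i \<le> x" for i
  proof (induction i)
    case 0 then show ?case using P x unfolding is_partition_def by simp
  next
    case (Suc i)
    then have "i < N" "t i \<le> x" by auto
    then show ?case using H by auto
  qed
  then have "t N \<le> x" by simp
  then show False using P x unfolding is_partition_def by simp
qed

lemma npoints_upper:
  assumes P: "is_partition a b t N" and N: "N \<ge> 1" and h: "0 \<le> h"
  shows "real (npoints t N s (s + h)) \<le> h / minmesh t N + 1"
proof -
  define m where "m = minmesh t N"
  have m: "m > 0" unfolding m_def by (rule minmesh_pos[OF P N])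
  define S where "S = {i. i \<le> N \<and> t i \<in> {s..s+h}}"
  have fin: "finite S" unfolding S_def by auto
  have hm: "0 \<le> h / m" using h m by simp
  show ?thesis
  proof (cases "S = {}")
    case True
    then show ?thesis using hm unfolding npoints_def S_def[symmetric] m_def by simp
  next
    case False
    define i0 where "i0 = Min S"
    have i0S: "i0 \<in> S" unfolding i0_def using fin False by (rule Min_in)
    define K where "K = nat \<lfloor>h / m\<rfloor>"
    have sub: "S \<subseteq> {i0..i0 + K}"
    proof
      fix j assume j: "j \<in> S"
      have "i0 \<le> j" unfolding i0_def using fin j by (rule Min_le)
      have "real (j - i0) * m \<le> t (i0 + (j - i0)) - t i0"
        using j \<open>i0 \<le> j\<close> unfolding S_def
        by (intro gaps_lower[where N=N]) (auto simp: m_def intro: minmesh_le_gap)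
      also have "\<dots> = t j - t i0" using \<open>i0 \<le> j\<close> by simp
      also have "\<dots> \<le> h" using j i0S unfolding S_def by auto
      finally have "real (j - i0) \<le> h / m" using m by (simp add: field_simps)
      then have "j - i0 \<le> K" unfolding K_def by (rule le_nat_floor)
      then show "j \<in> {i0..i0 + K}" using \<open>i0 \<le> j\<close> by auto
    qed
    have "card S \<le> card {i0..i0 + K}" using sub by (intro card_mono) auto
    then have "card S \<le> K + 1" by simp
    then have "real (card S) \<le> real K + 1" by linarith
    also have "real K \<le> h / m" unfolding K_def using hm by (rule of_nat_floor)
    finally show ?thesis unfolding npoints_def S_def[symmetric] m_def by simp
  qed
qed

lemma npoints_lower:
  assumes P: "is_partition a b t N" and N: "N \<ge> 1" and s: "a \<le> s" "s + h \<le> b"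
    and h: "0 \<le> h"
  shows "h / mesh t N - 1 \<le> real (npoints t N s (s + h))"
proof -
  define M where "M = mesh t N"
  have mm: "minmesh t N \<le> M" unfolding M_def
    using minmesh_le_gap[of 0 N t] gap_le_mesh[of 0 N t] N by simp
  have M: "M > 0" using minmesh_pos[OF P N] mm by simp
  define S where "S = {i. i \<le> N \<and> t i \<in> {s..s+h}}"
  have fin: "finite S" unfolding S_def by auto
  define K where "K = nat \<lfloor>h / M\<rfloor>"
  have KM: "real K * M \<le> h"
  proof -
    have "real K \<le> h / M" unfolding K_def using h M by (intro of_nat_floor) simp
    then show ?thesis using M by (simp add: field_simps)
  qed
  have ex: "\<exists>j. j \<in> S \<and> s + real k * M < t j \<and> t j \<le> s + real k * M + M" if k: "k < K" for k
  proof -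
    have "real (Suc k) * M \<le> real K * M" using k M by (intro mult_right_mono) auto
    then have k1: "real k * M + M \<le> h" using KM by (simp add: algebra_simps)
    have "0 \<le> real k * M" using M by simp
    then obtain i where i: "i < N" "t i \<le> s + real k * M" "s + real k * M < t (Suc i)"
      using exists_cell[OF P, of "s + real k * M"] s k1 M \<open>0 \<le> real k * M\<close> by auto
    have "t (Suc i) - t i \<le> M" unfolding M_def using i(1) by (rule gap_le_mesh)
    then have "t (Suc i) \<le> s + real k * M + M" using i by simp
    moreover have "s \<le> t (Suc i)" using i \<open>0 \<le> real k * M\<close> by simp
    ultimately show ?thesis using i k1 unfolding S_def by (intro exI[of _ "Suc i"]) auto
  qed
  then obtain f where f: "\<And>k. k < K \<Longrightarrow> f k \<in> S \<and> s + real k * M < t (f k) \<and> t (f k) \<le> s + real k * M + M"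
    by metis
  have inj: "inj_on f {..<K}"
  proof (rule inj_onI)
    fix k1 k2 assume k: "k1 \<in> {..<K}" "k2 \<in> {..<K}" "f k1 = f k2"
    show "k1 = k2"
    proof (rule ccontr)
      assume "k1 \<noteq> k2"
      then consider "k1 < k2" | "k2 < k1" by linarith
      then show False
      proof cases
        case 1
        then have "real (Suc k1) * M \<le> real k2 * M" using M by (intro mult_right_mono) auto
        then have "real k1 * M + M \<le> real k2 * M" by (simp add: algebra_simps)
        then show False using f[of k1] f[of k2] k by auto
      next
        case 2
        then have "real (Suc k2) * M \<le> real k1 * M" using M by (intro mult_right_mono) auto
        then have "real k2 * M + M \<le> real k1 * M" by (simp add: algebra_simps)
        then show False using f[of k1] f[of k2] k by auto
      qed
    qed
  qed
  have "card {..<K} \<le> card S" using inj f fin by (intro card_inj_on_le) auto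
  then have "K \<le> card S" by simp
  moreover have "h / M - 1 \<le> real K" unfolding K_def using h M by linarith
  ultimately show ?thesis unfolding npoints_def S_def[symmetric] M_def by linarith
qed



lemma real_ratio_bounds:
  fixes A c x y M1 M2 :: real
  assumes "A > 0" "x > 0" "y > 0" "A \<le> x * M1" "x * M1 \<le> c * A" "A \<le> y * M2" "y * M2 \<le> c * A"
  shows "M1 / M2 \<le> c * (y / x)" "y / x \<le> c * (M1 / M2)"
proof -
  have c: "c > 0" using assms by (smt (verit) mult_pos_pos zero_less_mult_iff)
  have M1: "M1 > 0" using assms by (smt (verit) zero_less_mult_iff)
  have M2: "M2 > 0" using assms by (smt (verit) zero_less_mult_iff)
  have "x * M1 \<le> c * (y * M2)" using assms c by (smt (verit) mult_left_mono)
  then show "M1 / M2 \<le> c * (y / x)" using assms M2 by (simp add: field_simps)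
  have "y * M2 \<le> c * (x * M1)" using assms c by (smt (verit) mult_left_mono)
  then show "y / x \<le> c * (M1 / M2)" using assms M2 by (simp add: field_simps)
qed

lemma ev_transfer:
  assumes "eventually (\<lambda>n. f n \<le> c * g n) F" "(c::real) > 0" "\<exists>B. eventually (\<lambda>n. g n \<le> B) F"
  shows "\<exists>B. eventually (\<lambda>n. f n \<le> B) F"
proof -
  obtain B where B: "eventually (\<lambda>n. g n \<le> B) F" using assms(3) by blast
  have "eventually (\<lambda>n. f n \<le> c * B) F"
    using assms(1) B
  proof eventually_elim
    case (elim n)
    then have "c * g n \<le> c * B" using assms(2) by simp
    then show ?case using elim by linarith
  qed
  then show ?thesis by blast
qed

lemma seqP: "partition_seq a b t N \<Longrightarrow> n \<ge> 1 \<Longrightarrow> is_partition a b (t n) (N n)"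
  unfolding partition_seq_def by blast

lemma balanced_le: assumes "balanced t N" "partition_seq a b t N" "a < b"
  obtains c where "c > 0" "\<And>n. n \<ge> 1 \<Longrightarrow> mesh (t n) (N n) \<le> c * minmesh (t n) (N n)"
proof -
  obtain c where c: "c > 0" "\<And>n. n \<ge> 1 \<Longrightarrow> mesh (t n) (N n) / minmesh (t n) (N n) \<le> c"
    using assms(1) unfolding balanced_def by blast
  have "mesh (t n) (N n) \<le> c * minmesh (t n) (N n)" if n: "n \<ge> 1" for n
  proof -
    have P: "is_partition a b (t n) (N n)" using seqP[OF assms(2) n] .
    have "minmesh (t n) (N n) > 0" using minmesh_pos[OF P part_N_pos[OF P assms(3)]] .
    then show ?thesis using c(2)[OF n] by (simp add: pos_divide_le_eq mult.commute)
  qed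
  then show ?thesis using that c(1) by blast
qed

lemma part_i:
  fixes T :: real
  assumes T: "T > 0" and part: "partition_seq 0 T t N"
  shows "balanced t N \<longleftrightarrow>
        liminf (\<lambda>n. ereal (real (N n) * minmesh (t n) (N n))) > 0 \<and>
        limsup (\<lambda>n. ereal (real (N n) * mesh (t n) (N n))) < \<infinity>"
  unfolding liminf_pos_iff limsup_fin_iff
proof
  assume bal: "balanced t N"
  obtain c where c: "c > 0" "\<And>n. n \<ge> 1 \<Longrightarrow> mesh (t n) (N n) \<le> c * minmesh (t n) (N n)"
    using balanced_le[OF bal part] T by auto
  have ev1: "eventually (\<lambda>n. n \<ge> (1::nat)) sequentially" by (rule eventually_ge_at_top)
  have A: "T / c \<le> real (N n) * minmesh (t n) (N n) \<and> real (N n) * mesh (t n) (N n) \<le> c * T"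
    if n: "n \<ge> 1" for n
  proof -
    have P: "is_partition 0 T (t n) (N n)" using seqP[OF part n] .
    have h1: "T \<le> real (N n) * mesh (t n) (N n)" using N_mesh_ge[OF P] by simp
    have h2: "real (N n) * minmesh (t n) (N n) \<le> T" using N_minmesh_le[OF P] by simp
    have "real (N n) * mesh (t n) (N n) \<le> real (N n) * (c * minmesh (t n) (N n))"
      by (rule mult_left_mono[OF c(2)[OF n]]) simp
    then have h3: "real (N n) * mesh (t n) (N n) \<le> c * (real (N n) * minmesh (t n) (N n))"
      by (simp add: mult_ac)
    have "T \<le> c * (real (N n) * minmesh (t n) (N n))" using h1 h3 by linarith
    then have "T / c \<le> real (N n) * minmesh (t n) (N n)" using c(1) by (simp add: divide_le_eq mult.commute)
    moreover have "c * (real (N n) * minmesh (t n) (N n)) \<le> c * T" using h2 c(1) by simp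
    ultimately show ?thesis using h3 by linarith
  qed
  have "eventually (\<lambda>n. T / c \<le> real (N n) * minmesh (t n) (N n)) sequentially"
    using ev1 by (rule eventually_mono) (use A in blast)
  moreover have "eventually (\<lambda>n. real (N n) * mesh (t n) (N n) \<le> c * T) sequentially"
    using ev1 by (rule eventually_mono) (use A in blast)
  ultimately show "(\<exists>d>0. eventually (\<lambda>n. d \<le> real (N n) * minmesh (t n) (N n)) sequentially) \<and>
    (\<exists>B. eventually (\<lambda>n. real (N n) * mesh (t n) (N n) \<le> B) sequentially)"
    using T c(1) by (meson divide_pos_pos)
next
  assume "(\<exists>d>0. eventually (\<lambda>n. d \<le> real (N n) * minmesh (t n) (N n)) sequentially) \<and>
    (\<exists>B. eventually (\<lambda>n. real (N n) * mesh (t n) (N n) \<le> B) sequentially)"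
  then obtain d B where d: "d > 0" and ev: "eventually (\<lambda>n. d \<le> real (N n) * minmesh (t n) (N n)) sequentially"
    and evB: "eventually (\<lambda>n. real (N n) * mesh (t n) (N n) \<le> B) sequentially" by blast
  have ev1: "eventually (\<lambda>n. n \<ge> (1::nat)) sequentially" by (rule eventually_ge_at_top)
  have "eventually (\<lambda>n. mesh (t n) (N n) / minmesh (t n) (N n) \<le> B / d) sequentially"
    using ev evB ev1
  proof eventually_elim
    case (elim n)
    have P: "is_partition 0 T (t n) (N n)" using seqP[OF part elim(3)] .
    have Nn: "N n \<ge> 1" using part_N_pos[OF P T] .
    have h1: "T \<le> real (N n) * mesh (t n) (N n)" using N_mesh_ge[OF P] by simp
    have "mesh (t n) (N n) / minmesh (t n) (N n)
        = (real (N n) * mesh (t n) (N n)) / (real (N n) * minmesh (t n) (N n))"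
      using Nn by simp
    also have "\<dots> \<le> B / d" using elim h1 T d by (intro frac_le) auto
    finally show ?case .
  qed
  from eventually_bound_global[OF this] show "balanced t N" unfolding balanced_def by blast
qed

lemma part_iii:
  fixes T :: real
  assumes T: "T > 0" and part: "partition_seq 0 T t N" and bal: "balanced t N"
  shows "(limsup (\<lambda>n. ereal (real (N (Suc n)) / real (N n))) < \<infinity> \<longleftrightarrow>
          limsup (\<lambda>n. ereal (mesh (t n) (N n) / mesh (t (Suc n)) (N (Suc n)))) < \<infinity>) \<and>
         (limsup (\<lambda>n. ereal (mesh (t n) (N n) / mesh (t (Suc n)) (N (Suc n)))) < \<infinity> \<longleftrightarrow>
          limsup (\<lambda>n. ereal (minmesh (t n) (N n) / minmesh (t (Suc n)) (N (Suc n)))) < \<infinity>)"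
proof -
  obtain c where c: "c > 0" "\<And>n. n \<ge> 1 \<Longrightarrow> mesh (t n) (N n) \<le> c * minmesh (t n) (N n)"
    using balanced_le[OF bal part] T by auto
  define a where "a n = real (N (Suc n)) / real (N n)" for n
  define b where "b n = mesh (t n) (N n) / mesh (t (Suc n)) (N (Suc n))" for n
  define e where "e n = minmesh (t n) (N n) / minmesh (t (Suc n)) (N (Suc n))" for n
  have F: "T \<le> real (N n) * mesh (t n) (N n) \<and> real (N n) * mesh (t n) (N n) \<le> c * T \<and>
      T / c \<le> real (N n) * minmesh (t n) (N n) \<and> real (N n) * minmesh (t n) (N n) \<le> c * (T / c)
      \<and> real (N n) > 0"
    if n: "n \<ge> 1" for n
  proof -
    have P: "is_partition 0 T (t n) (N n)" using seqP[OF part n] .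
    have h1: "T \<le> real (N n) * mesh (t n) (N n)" using N_mesh_ge[OF P] by simp
    have h2: "real (N n) * minmesh (t n) (N n) \<le> T" using N_minmesh_le[OF P] by simp
    have "real (N n) * mesh (t n) (N n) \<le> real (N n) * (c * minmesh (t n) (N n))"
      by (rule mult_left_mono[OF c(2)[OF n]]) simp
    then have h3: "real (N n) * mesh (t n) (N n) \<le> c * (real (N n) * minmesh (t n) (N n))"
      by (simp add: mult_ac)
    have "T \<le> c * (real (N n) * minmesh (t n) (N n))" using h1 h3 by linarith
    then have "T / c \<le> real (N n) * minmesh (t n) (N n)" using c(1) by (simp add: divide_le_eq mult.commute)
    moreover have "c * (real (N n) * minmesh (t n) (N n)) \<le> c * T" using h2 c(1) by simp
    moreover have "c * (T / c) = T" using c(1) by simp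
    moreover have "real (N n) > 0" using part_N_pos[OF P T] by simp
    ultimately show ?thesis using h1 h2 h3 by linarith
  qed
  have R: "b n \<le> c * a n \<and> a n \<le> c * b n \<and> e n \<le> c * a n \<and> a n \<le> c * e n" if n: "n \<ge> 1" for n
  proof -
    have n': "Suc n \<ge> 1" by simp
    note F1 = F[OF n] and F2 = F[OF n']
    have "b n \<le> c * a n \<and> a n \<le> c * b n"
      unfolding a_def b_def using real_ratio_bounds[of T "real (N n)" "real (N (Suc n))"] F1 F2 T by blast
    moreover have "e n \<le> c * a n \<and> a n \<le> c * e n"
      unfolding a_def e_def using real_ratio_bounds[of "T / c" "real (N n)" "real (N (Suc n))"] F1 F2 T c(1) by auto
    ultimately show ?thesis by blast
  qed
  have ev1: "eventually (\<lambda>n. n \<ge> (1::nat)) sequentially" by (rule eventually_ge_at_top)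
  have E1: "eventually (\<lambda>n. b n \<le> c * a n) sequentially" using ev1 by (rule eventually_mono) (use R in blast)
  have E2: "eventually (\<lambda>n. a n \<le> c * b n) sequentially" using ev1 by (rule eventually_mono) (use R in blast)
  have E3: "eventually (\<lambda>n. e n \<le> c * a n) sequentially" using ev1 by (rule eventually_mono) (use R in blast)
  have E4: "eventually (\<lambda>n. a n \<le> c * e n) sequentially" using ev1 by (rule eventually_mono) (use R in blast)
  have "((\<exists>B. eventually (\<lambda>n. a n \<le> B) sequentially) \<longleftrightarrow> (\<exists>B. eventually (\<lambda>n. b n \<le> B) sequentially)) \<and>
        ((\<exists>B. eventually (\<lambda>n. b n \<le> B) sequentially) \<longleftrightarrow> (\<exists>B. eventually (\<lambda>n. e n \<le> B) sequentially))"
    using ev_transfer[OF E1 c(1)] ev_transfer[OF E2 c(1)] ev_transfer[OF E3 c(1)] ev_transfer[OF E4 c(1)]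
    by blast
  then show ?thesis unfolding a_def b_def e_def limsup_fin_iff .
qed



lemma ratio_single:
  fixes T h c :: real
  assumes P: "is_partition 0 T t N" and N: "N \<ge> 1" and h: "0 < h" "h \<le> T"
    and c: "mesh t N \<le> c * minmesh t N" and Mh: "mesh t N \<le> h / 2"
  shows "(SUP s\<in>{0..T-h}. real (npoints t N s (s+h))) / (INF s\<in>{0..T-h}. real (npoints t N s (s+h)))
         \<le> 2 * c + 1"
proof -
  define m where "m = minmesh t N"
  define M where "M = mesh t N"
  have m: "m > 0" unfolding m_def by (rule minmesh_pos[OF P N])
  have mM: "m \<le> M" unfolding M_def m_def
    using minmesh_le_gap[of 0 N t] gap_le_mesh[of 0 N t] N by simp
  have M: "M > 0" using m mM by simp
  have ne: "{0..T-h} \<noteq> {}" using h by simp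
  have up: "(SUP s\<in>{0..T-h}. real (npoints t N s (s+h))) \<le> h / m + 1"
    by (rule cSUP_least[OF ne]) (unfold m_def, rule npoints_upper[OF P N], use h in simp)
  define q where "q = h / M"
  have q2: "2 \<le> q" unfolding q_def using Mh M by (simp add: M_def le_divide_eq)
  have lo: "q / 2 \<le> (INF s\<in>{0..T-h}. real (npoints t N s (s+h)))"
  proof (rule cINF_greatest[OF ne])
    fix s assume s: "s \<in> {0..T-h}"
    have "q - 1 \<le> real (npoints t N s (s + h))" unfolding q_def M_def
      using npoints_lower[OF P N, of s h] s h by auto
    then show "q / 2 \<le> real (npoints t N s (s + h))" using q2 by linarith
  qed
  have q0: "q / 2 > 0" using q2 by simp
  have "(SUP s\<in>{0..T-h}. real (npoints t N s (s+h))) / (INF s\<in>{0..T-h}. real (npoints t N s (s+h)))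
        \<le> (h / m + 1) / (q / 2)"
    using up lo q0 m h by (intro frac_le) auto
  also have "\<dots> \<le> 2 * c + 1"
  proof -
    have e1: "h / m \<le> c * q"
    proof -
      have "h * M \<le> h * (c * m)" using c h unfolding M_def m_def by (intro mult_left_mono) auto
      then show ?thesis unfolding q_def using m M by (simp add: field_simps)
    qed
    have "h / m + 1 \<le> c * q + q / 2" using e1 q2 by linarith
    also have "\<dots> = (2 * c + 1) * (q / 2)" by (simp add: algebra_simps)
    finally show ?thesis using q0 by (simp add: pos_divide_le_eq)
  qed
  finally show ?thesis .
qed

lemma part_ii:
  fixes T :: real
  assumes T: "T > 0" and part: "partition_seq 0 T t N" and bal: "balanced t N"
    and vanish: "(\<lambda>n. mesh (t n) (N n)) \<longlonglongrightarrow> 0"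
    and h: "0 < h" "h \<le> T"
  shows "limsup (\<lambda>n. ereal ((SUP s\<in>{0..T-h}. real (npoints (t n) (N n) s (s+h)))
                          / (INF s\<in>{0..T-h}. real (npoints (t n) (N n) s (s+h))))) < \<infinity>"
  unfolding limsup_fin_iff
proof -
  obtain c where c: "c > 0" "\<And>n. n \<ge> 1 \<Longrightarrow> mesh (t n) (N n) \<le> c * minmesh (t n) (N n)"
    using balanced_le[OF bal part] T by auto
  have ev1: "eventually (\<lambda>n. n \<ge> (1::nat)) sequentially" by (rule eventually_ge_at_top)
  have ev2: "eventually (\<lambda>n. mesh (t n) (N n) < h / 2) sequentially"
    using order_tendstoD(2)[OF vanish, of "h / 2"] h by simp
  have "eventually (\<lambda>n. (SUP s\<in>{0..T-h}. real (npoints (t n) (N n) s (s+h)))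
                          / (INF s\<in>{0..T-h}. real (npoints (t n) (N n) s (s+h))) \<le> 2 * c + 1) sequentially"
    using ev1 ev2
  proof eventually_elim
    case (elim n)
    have P: "is_partition 0 T (t n) (N n)" using seqP[OF part elim(1)] .
    show ?case
      by (rule ratio_single[OF P part_N_pos[OF P T] h c(2)[OF elim(1)]]) (use elim in simp)
  qed
  then show "\<exists>B. eventually (\<lambda>n. (SUP s\<in>{0..T-h}. real (npoints (t n) (N n) s (s+h)))
                          / (INF s\<in>{0..T-h}. real (npoints (t n) (N n) s (s+h))) \<le> B) sequentially"
    by blast
qed



lemma mesh_le_scale:
  assumes "N \<ge> 1" "\<And>i. i < N \<Longrightarrow> u (Suc i) - u i \<le> b * (t (Suc i) - t i)" "b \<ge> 0"
  shows "mesh u N \<le> b * mesh t N"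
proof -
  have "mesh u N \<in> (\<lambda>i. u (Suc i) - u i) ` {..<N}"
    unfolding mesh_def using assms(1) by (intro Max_in) (auto simp: lessThan_empty_iff)
  then obtain i where i: "i < N" "mesh u N = u (Suc i) - u i" by auto
  have "b * (t (Suc i) - t i) \<le> b * mesh t N"
    using assms(3) gap_le_mesh[OF i(1)] by (rule mult_left_mono[rotated])
  then show ?thesis using i assms(2)[OF i(1)] by linarith
qed

lemma minmesh_ge_scale:
  assumes "N \<ge> 1" "\<And>i. i < N \<Longrightarrow> a * (t (Suc i) - t i) \<le> u (Suc i) - u i" "a \<ge> 0"
  shows "a * minmesh t N \<le> minmesh u N"
proof -
  have "minmesh u N \<in> (\<lambda>i. u (Suc i) - u i) ` {..<N}"
    unfolding minmesh_def using assms(1) by (intro Min_in) (auto simp: lessThan_empty_iff)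
  then obtain i where i: "i < N" "minmesh u N = u (Suc i) - u i" by auto
  have "a * minmesh t N \<le> a * (t (Suc i) - t i)"
    using assms(3) minmesh_le_gap[OF i(1)] by (rule mult_left_mono[rotated])
  then show ?thesis using i assms(2)[OF i(1)] by linarith
qed

lemma part_iv:
  fixes T :: real and g g' :: "real \<Rightarrow> real"
  assumes T: "T > 0"
    and der: "\<forall>x\<in>{0..T}. (g has_real_derivative g' x) (at x within {0..T})"
    and cont': "continuous_on {0..T} g'" and sm: "strict_mono_on {0..T} g"
    and inf: "(INF x\<in>{0..T}. g' x) > 0"
    and part: "partition_seq 0 T s M" and bal: "balanced s M"
  shows "g ` {0..T} = {g 0..g T} \<and>
             partition_seq (g 0) (g T) (\<lambda>n i. g (s n i)) M \<and>
             balanced (\<lambda>n i. g (s n i)) M"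
proof -
  have contg: "continuous_on {0..T} g" using der by (intro DERIV_continuous_on) auto
  have bnd: "bounded (g' ` {0..T})"
    by (intro compact_imp_bounded compact_continuous_image cont') auto
  then obtain b where b: "\<And>x. x \<in> {0..T} \<Longrightarrow> \<bar>g' x\<bar> \<le> b" unfolding bounded_real by (auto simp del: atLeastAtMost_iff)
  define a where "a = (INF x\<in>{0..T}. g' x)"
  have a: "a > 0" using inf unfolding a_def .
  have ga: "\<And>x. x \<in> {0..T} \<Longrightarrow> a \<le> g' x"
    unfolding a_def by (rule cINF_lower[OF bounded_imp_bdd_below[OF bnd]])
  have ab: "a \<le> b" using ga[of 0] b[of 0] T by force
  have key: "a * (y - x) \<le> g y - g x \<and> g y - g x \<le> b * (y - x)"
    if xy: "0 \<le> x" "x < y" "y \<le> T" for x y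
  proof -
    have "\<And>z. x \<le> z \<Longrightarrow> z \<le> y \<Longrightarrow> (g has_derivative (\<lambda>d. g' z * d)) (at z within {x..y})"
    proof -
      fix z assume z: "x \<le> z" "z \<le> y"
      have "(g has_real_derivative g' z) (at z within {0..T})" using der z xy by auto
      then have "(g has_real_derivative g' z) (at z within {x..y})"
        by (rule DERIV_subset) (use xy in auto)
      then show "(g has_derivative (\<lambda>d. g' z * d)) (at z within {x..y})"
        by (simp add: has_field_derivative_def)
    qed
    from mvt_simple[OF xy(2) this] obtain z where z: "z \<in> {x<..<y}" "g y - g x = g' z * (y - x)"
      by blast
    have zT: "z \<in> {0..T}" using z xy by auto
    have "a * (y - x) \<le> g' z * (y - x)" using ga[OF zT] xy by (intro mult_right_mono) auto
    moreover have "g' z * (y - x) \<le> b * (y - x)" using b[OF zT] xy by (intro mult_right_mono) auto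
    ultimately show ?thesis using z by simp
  qed
  have img: "g ` {0..T} = {g 0..g T}"
  proof
    show "g ` {0..T} \<subseteq> {g 0..g T}"
    proof
      fix y assume "y \<in> g ` {0..T}"
      then obtain x where x: "x \<in> {0..T}" "y = g x" by auto
      have "g 0 \<le> g x" using strict_mono_onD[OF sm, of 0 x] x T by (cases "x = 0") auto
      moreover have "g x \<le> g T" using strict_mono_onD[OF sm, of x T] x T by (cases "x = T") auto
      ultimately show "y \<in> {g 0..g T}" using x by simp
    qed
    show "{g 0..g T} \<subseteq> g ` {0..T}"
    proof
      fix y assume "y \<in> {g 0..g T}"
      then obtain x where "0 \<le> x" "x \<le> T" "g x = y"
        using IVT'[of g 0 y T] contg T by auto
      then show "y \<in> g ` {0..T}" by auto
    qed
  qed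
  have gpart: "is_partition (g 0) (g T) (\<lambda>i. g (s n i)) (M n)" if n: "n \<ge> 1" for n
  proof -
    have P: "is_partition 0 T (s n) (M n)" using seqP[OF part n] .
    have "g (s n i) < g (s n (Suc i))" if i: "i < M n" for i
      using strict_mono_onD[OF sm] part_range[OF P, of i] part_range[OF P, of "Suc i"] i P
      unfolding is_partition_def by auto
    then show ?thesis using P unfolding is_partition_def by auto
  qed
  have gseq: "partition_seq (g 0) (g T) (\<lambda>n i. g (s n i)) M"
    unfolding partition_seq_def using gpart by blast
  obtain c where c: "c > 0" "\<And>n. n \<ge> 1 \<Longrightarrow> mesh (s n) (M n) \<le> c * minmesh (s n) (M n)"
    using balanced_le[OF bal part] T by auto
  have "mesh (\<lambda>i. g (s n i)) (M n) / minmesh (\<lambda>i. g (s n i)) (M n) \<le> b * c / a"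
    if n: "n \<ge> 1" for n
  proof -
    have P: "is_partition 0 T (s n) (M n)" using seqP[OF part n] .
    have Mn: "M n \<ge> 1" using part_N_pos[OF P T] .
    have gap: "a * (s n (Suc i) - s n i) \<le> g (s n (Suc i)) - g (s n i) \<and>
               g (s n (Suc i)) - g (s n i) \<le> b * (s n (Suc i) - s n i)" if i: "i < M n" for i
      using key[of "s n i" "s n (Suc i)"] part_range[OF P, of i] part_range[OF P, of "Suc i"] i P
      unfolding is_partition_def by auto
    have m1: "mesh (\<lambda>i. g (s n i)) (M n) \<le> b * mesh (s n) (M n)"
      using Mn gap a ab by (intro mesh_le_scale) auto
    have m2: "a * minmesh (s n) (M n) \<le> minmesh (\<lambda>i. g (s n i)) (M n)"
      using Mn gap a by (intro minmesh_ge_scale) auto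
    have mp: "minmesh (s n) (M n) > 0" using minmesh_pos[OF P Mn] .
    have "mesh (s n) (M n) \<ge> 0" using mp c(2)[OF n] minmesh_le_gap[of 0 "M n" "s n"] gap_le_mesh[of 0 "M n" "s n"] Mn
      by simp
    then have "mesh (\<lambda>i. g (s n i)) (M n) / minmesh (\<lambda>i. g (s n i)) (M n)
        \<le> (b * mesh (s n) (M n)) / (a * minmesh (s n) (M n))"
      using m1 m2 a mp ab by (intro frac_le) auto
    also have "\<dots> = (b / a) * (mesh (s n) (M n) / minmesh (s n) (M n))" by simp
    also have "\<dots> \<le> (b / a) * c"
      using c(2)[OF n] mp a ab by (intro mult_left_mono) (auto simp: pos_divide_le_eq mult.commute)
    finally show ?thesis by simp
  qed
  moreover have "b * c / a > 0" using a ab c by simp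
  ultimately have "balanced (\<lambda>n i. g (s n i)) M" unfolding balanced_def by blast
  then show ?thesis using img gseq by blast
qed


theorem proposition2p2:
  fixes T :: real and t :: "nat \<Rightarrow> nat \<Rightarrow> real" and N :: "nat \<Rightarrow> nat"
  assumes T: "T > 0"
    and part: "partition_seq 0 T t N"
    and vanish: "(\<lambda>n. mesh (t n) (N n)) \<longlonglongrightarrow> 0"
  shows
    "(balanced t N \<longleftrightarrow>
        liminf (\<lambda>n. ereal (real (N n) * minmesh (t n) (N n))) > 0 \<and>
        limsup (\<lambda>n. ereal (real (N n) * mesh (t n) (N n))) < \<infinity>)
     \<and> (balanced t N \<longrightarrow> (\<forall>h. 0 < h \<and> h \<le> T \<longrightarrow>
        limsup (\<lambda>n. ereal ((SUP s\<in>{0..T-h}. real (npoints (t n) (N n) s (s+h)))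
                          / (INF s\<in>{0..T-h}. real (npoints (t n) (N n) s (s+h))))) < \<infinity>))
     \<and> (balanced t N \<longrightarrow>
        ((limsup (\<lambda>n. ereal (real (N (Suc n)) / real (N n))) < \<infinity> \<longleftrightarrow>
          limsup (\<lambda>n. ereal (mesh (t n) (N n) / mesh (t (Suc n)) (N (Suc n)))) < \<infinity>) \<and>
         (limsup (\<lambda>n. ereal (mesh (t n) (N n) / mesh (t (Suc n)) (N (Suc n)))) < \<infinity> \<longleftrightarrow>
          limsup (\<lambda>n. ereal (minmesh (t n) (N n) / minmesh (t (Suc n)) (N (Suc n)))) < \<infinity>)))
     \<and> (\<forall>(g::real \<Rightarrow> real) g'. 
          (\<forall>x\<in>{0..T}. (g has_real_derivative g' x) (at x within {0..T})) \<and>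
          continuous_on {0..T} g' \<and> strict_mono_on {0..T} g \<and>
          (INF x\<in>{0..T}. g' x) > 0 \<longrightarrow>
          (\<forall>(s :: nat \<Rightarrow> nat \<Rightarrow> real) M. partition_seq 0 T s M \<and> balanced s M \<longrightarrow>
             g ` {0..T} = {g 0..g T} \<and>
             partition_seq (g 0) (g T) (\<lambda>n i. g (s n i)) M \<and>
             balanced (\<lambda>n i. g (s n i)) M))"
proof -
  have i: "balanced t N \<longleftrightarrow>
        liminf (\<lambda>n. ereal (real (N n) * minmesh (t n) (N n))) > 0 \<and>
        limsup (\<lambda>n. ereal (real (N n) * mesh (t n) (N n))) < \<infinity>"
    by (rule part_i[OF T part])
  show ?thesis
    using i part_ii[OF T part _ vanish] part_iii[OF T part] part_iv[OF T] by blast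
qed

end
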